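(* Let $q>1$ and $m,n\in\mathbb{N}$. Then $U_{n,q}(e_m;z)$ is a polynomial in $z$ of degree at most $\min(m,n)$, and \[U_{n,q}(e_m;z)=\frac{[n-1]_q!}{[n+m-1]_q!}\sum_{s=1}^m S_q(m,s)\,[n]_q^s\,B_{n,q}(e_s;z).\]
   Context: For an integer $n\ge 0$ and $p>0$: $[n]_p=1+p+\dots+p^{n-1}$ ($[0]_p=0$), $[n]_p!=[1]_p\cdots[n]_p$ ($[0]_p!=1$), $\left[\begin{smallmatrix}n\\k\end{smallmatrix}\right]_p=\frac{[n]_p!}{[k]_p![n-k]_p!}$. For $z\in\mathbb{C}$, $(1-z)_p^n=\prod_{s=0}^{n-1}(1-p^s z)$ and $p_{n,k}(p;z)=\left[\begin{smallmatrix}n\\k\end{smallmatrix}\right]_p z^k(1-z)_p^{n-k}$. For $0<p<1$, $\int_0^1 g(t)\,d_pt=(1-p)\sum_{j=0}^\infty g(p^j)p^j$. For $q>1$, $n\in\mathbb{N}$ and $f:[0,1]\to\mathbb{C}$, \[U_{n,q}(f;z)=f(0)p_{n,0}(q;z)+f(1)p_{n,n}(q;z)+[n-1]_{q^{-1}}\sum_{k=1}^{n-1}q^{k-1}p_{n,k}(q;z)\int_0^1 p_{n-2,k-1}(q^{-1};q^{-1}t)\,f(q^{k-n}t)\,d_{q^{-1}}t\] (sum empty for $n=1$). $e_m(t)=t^m$. The numbers $S_q(m,s)$ are defined by the polynomial identity $\prod_{s=0}^{m-1}(q^sx+[s]_q)=\sum_{s=1}^m S_q(m,s)x^s$ in the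 variable $x$ (so that $[k]_q[k+1]_q\cdots[k+m-1]_q=\sum_{s=1}^mS_q(m,s)[k]_q^s$). $B_{n,q}(e_s;z)=\sum_{k=0}^n\left(\frac{[k]_q}{[n]_q}\right)^s p_{n,k}(q;z)$ is the $q$-Bernstein polynomial of $e_s$. *)

theory Defs
  imports "HOL-Analysis.Analysis" "HOL-Computational_Algebra.Polynomial"
begin

definition qint :: "real \<Rightarrow> nat \<Rightarrow> real" where
  "qint p n = (\<Sum>i<n. p ^ i)"

definition qfact :: "real \<Rightarrow> nat \<Rightarrow> real" where
  "qfact p n = (\<Prod>k=1..n. qint p k)"

text \<open>q-binomial coefficient (used for k \<le> n)\<close>
definition qbinom :: "real \<Rightarrow> nat \<Rightarrow> nat \<Rightarrow> real" where
  "qbinom p n k = qfact p n / (qfact p k * qfact p (n - k))"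

definition qpoch :: "real \<Rightarrow> nat \<Rightarrow> complex \<Rightarrow> complex" where
  "qpoch p n z = (\<Prod>s<n. 1 - of_real (p ^ s) * z)"

definition pnk :: "real \<Rightarrow> nat \<Rightarrow> nat \<Rightarrow> complex \<Rightarrow> complex" where
  "pnk p n k z = of_real (qbinom p n k) * z ^ k * qpoch p (n - k) z"

text \<open>Jackson q-integral on [0,1], for 0<p<1\<close>
definition qintegral :: "real \<Rightarrow> (real \<Rightarrow> complex) \<Rightarrow> complex" where
  "qintegral p g = of_real (1 - p) * (\<Sum>j. g (p ^ j) * of_real (p ^ j))"

definition Uop :: "real \<Rightarrow> nat \<Rightarrow> (real \<Rightarrow> complex) \<Rightarrow> complex \<Rightarrow> complex" where
  "Uop q n f z =
     f 0 * pnk q n 0 z + f 1 * pnk q n n z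
     + of_real (qint (1/q) (n - 1)) *
       (\<Sum>k=1..n-1. of_real (q ^ (k - 1)) * pnk q n k z *
          qintegral (1/q) (\<lambda>t. pnk (1/q) (n - 2) (k - 1) (of_real (t / q)) *
                                 f (q powi (int k - int n) * t)))"

definition emon :: "nat \<Rightarrow> real \<Rightarrow> complex" where
  "emon m t = complex_of_real (t ^ m)"

definition Sq :: "real \<Rightarrow> nat \<Rightarrow> nat \<Rightarrow> real" where
  "Sq q m s = coeff (\<Prod>i<m. [: qint q i, q ^ i :]) s"

definition Bq_e :: "real \<Rightarrow> nat \<Rightarrow> nat \<Rightarrow> complex \<Rightarrow> complex" where
  "Bq_e q n s z = (\<Sum>k=0..n. of_real ((qint q k / qint q n) ^ s) * pnk q n k z)"

end

theory Submission
  imports Defs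
begin


lemma qint_closed: "p \<noteq> 1 \<Longrightarrow> qint p n = (1 - p^n) / (1 - p)"
  unfolding qint_def by (simp add: sum_gp_strict)

lemma qint_pos: "p > 0 \<Longrightarrow> n \<ge> 1 \<Longrightarrow> qint p n > 0"
  unfolding qint_def by (intro sum_pos) (auto simp: lessThan_empty_iff)

lemma qint_0[simp]: "qint p 0 = 0" by (simp add: qint_def)

lemma qfact_Suc: "qfact p (Suc n) = qfact p n * qint p (Suc n)"
  unfolding qfact_def by simp

lemma qfact_pos: "p > 0 \<Longrightarrow> qfact p n > 0"
  unfolding qfact_def by (intro prod_pos) (auto intro: qint_pos)

lemma qfact_0[simp]: "qfact p 0 = 1" by (simp add: qfact_def)

lemma qint_inv: "q > 1 \<Longrightarrow> qint q (Suc j) = q ^ j * qint (1/q) (Suc j)"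
proof -
  assume q: "q > 1"
  then have "1/q \<noteq> 1" by simp
  then show ?thesis using q
    by (simp add: qint_closed power_one_over field_simps)
qed

definition T :: "nat \<Rightarrow> nat" where "T j = (\<Sum>i<j. i)"

lemma T_Suc: "T (Suc j) = T j + j" by (simp add: T_def)

lemma T_add: "T (x + m) = T x + m * x + T m"
  by (induction m) (simp_all add: T_Suc T_def)

lemma qfact_inv: "q > 1 \<Longrightarrow> qfact q j = qfact (1/q) j * q ^ T j"
proof (induction j)
  case 0 then show ?case by (simp add: T_def)
next
  case (Suc j)
  then show ?case by (simp add: qfact_Suc qint_inv T_Suc power_add)
qed

lemma prod_qint_shift: "qfact p (K + m) = qfact p K * (\<Prod>i<m. qint p (Suc K + i))"
  by (induction m) (auto simp: qfact_Suc)



definition hb :: "real \<Rightarrow> nat \<Rightarrow> nat \<Rightarrow> nat \<Rightarrow> real" where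
  "hb p a b j = p^(j*(a+1)) * (\<Prod>s<b. 1 - p^(s+1+j))"

definition Ib :: "real \<Rightarrow> nat \<Rightarrow> nat \<Rightarrow> real" where
  "Ib p a b = (1-p) * (\<Sum>j. hb p a b j)"

lemma prod_unit_bounds:
  fixes p :: real assumes "0 < p" "p < 1"
  shows "0 \<le> (\<Prod>s<b. 1 - p^(f s)) \<and> (\<Prod>s<b. 1 - p^(f s)) \<le> 1"
proof -
  have "\<And>s. 0 \<le> 1 - p^(f s) \<and> 1 - p^(f s) \<le> 1"
    using assms by (simp add: power_le_one)
  then show ?thesis by (simp add: prod_nonneg prod_le_1)
qed

lemma pw_lt1: "0 < p \<Longrightarrow> p < (1::real) \<Longrightarrow> p^(Suc k) < 1"
  by (rule power_Suc_less_one)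

lemma hb_bounds:
  assumes "0 < p" "p < 1"
  shows "0 \<le> hb p a b j" "hb p a b j \<le> p^(j*(a+1))"
proof -
  have A: "0 \<le> (\<Prod>s<b. 1 - p^(s+1+j)) \<and> (\<Prod>s<b. 1 - p^(s+1+j)) \<le> 1"
    by (rule prod_unit_bounds[OF assms])
  have B: "0 \<le> p^(j*(a+1))" using assms by simp
  show "0 \<le> hb p a b j" unfolding hb_def using A B by simp
  show "hb p a b j \<le> p^(j*(a+1))" unfolding hb_def using A B mult_left_le by blast
qed

lemma geom_summable: "0 < p \<Longrightarrow> p < (1::real) \<Longrightarrow> summable (\<lambda>j. p^(j*(a+1)))"
proof -
  assume "0 < p" "p < 1"
  then have "norm (p^(a+1)) < 1" using pw_lt1[of p a] by simp
  then have "summable (\<lambda>j. (p^(a+1))^j)" by (rule summable_geometric)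
  moreover have "\<And>j. p^(j*(a+1)) = (p^(a+1))^j" by (metis power_mult mult.commute)
  ultimately show ?thesis by simp
qed

lemma hb_summable:
  assumes "0 < p" "p < 1"
  shows "summable (hb p a b)"
  by (rule summable_comparison_test'[OF geom_summable[OF assms, of a], of 0])
     (use hb_bounds[OF assms] in auto)

lemma hb_rec1: "hb p a (Suc b) j = hb p a b j - p^(Suc b) * hb p (Suc a) b j"
  unfolding hb_def by (simp add: algebra_simps power_add power_mult_distrib)

lemma Ib_rec1:
  assumes "0 < p" "p < 1"
  shows "Ib p a (Suc b) = Ib p a b - p^(Suc b) * Ib p (Suc a) b"
proof -
  have eq: "(\<Sum>j. hb p a (Suc b) j) = (\<Sum>j. hb p a b j) - p^(Suc b) * (\<Sum>j. hb p (Suc a) b j)"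
    unfolding hb_rec1
    by (rule sums_unique[symmetric]) (intro sums_diff sums_mult summable_sums hb_summable[OF assms])
  show ?thesis unfolding Ib_def eq by (simp add: algebra_simps)
qed

definition HH :: "real \<Rightarrow> nat \<Rightarrow> nat \<Rightarrow> nat \<Rightarrow> real" where
  "HH p a b j = p^(j*(a+1)) * (\<Prod>s<Suc b. 1 - p^(s+j))"

lemma HH_diff:
  "HH p a b j - HH p a b (Suc j) = (1 - p^(a+1)) * hb p a b j - (1 - p^(a+b+2)) * hb p (Suc a) b j"
proof -
  define P where "P = (\<Prod>s<b. 1 - p^(s+1+j))"
  have e1: "(\<Prod>s<Suc b. 1 - p^(s+j)) = (1 - p^j) * P"
    unfolding P_def by (subst prod.lessThan_Suc_shift) simp
  have e2: "(\<Prod>s<Suc b. 1 - p^(s+Suc j)) = P * (1 - p^(b+1+j))"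
    unfolding P_def by simp
  show ?thesis
    unfolding HH_def hb_def e1 e2 P_def[symmetric]
    by (simp add: algebra_simps power_add power_mult_distrib)
qed

lemma HH_lim:
  assumes "0 < p" "p < 1"
  shows "HH p a b \<longlonglongrightarrow> 0"
proof -
  have g: "(\<lambda>j. p^(j*(a+1))) \<longlonglongrightarrow> 0"
    using summable_LIMSEQ_zero[OF geom_summable[OF assms]] .
  have bound: "\<And>j. norm (HH p a b j) \<le> p^(j*(a+1))"
  proof -
    fix j
    have "0 \<le> (\<Prod>s<Suc b. 1 - p^(s+j)) \<and> (\<Prod>s<Suc b. 1 - p^(s+j)) \<le> 1"
      by (rule prod_unit_bounds[OF assms])
    moreover have "0 \<le> p^(j*(a+1))" using assms by simp
    ultimately show "norm (HH p a b j) \<le> p^(j*(a+1))"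
      unfolding HH_def by (auto simp: abs_mult intro: mult_left_le)
  qed
  show ?thesis
    by (rule Lim_null_comparison[OF _ g]) (intro always_eventually allI bound)
qed

lemma Ib_rec2:
  assumes "0 < p" "p < 1"
  shows "(1 - p^(a+1)) * Ib p a b = (1 - p^(a+b+2)) * Ib p (Suc a) b"
proof -
  have "(\<lambda>j. HH p a b j - HH p a b (Suc j)) sums (HH p a b 0 - 0)"
    by (rule telescope_sums'[OF HH_lim[OF assms]])
  moreover have "HH p a b 0 = 0" unfolding HH_def prod.lessThan_Suc_shift by simp
  ultimately have "(\<lambda>j. (1 - p^(a+1)) * hb p a b j - (1 - p^(a+b+2)) * hb p (Suc a) b j) sums 0"
    unfolding HH_diff by simp
  moreover have "(\<lambda>j. (1 - p^(a+1)) * hb p a b j - (1 - p^(a+b+2)) * hb p (Suc a) b j) sums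
       ((1 - p^(a+1)) * (\<Sum>j. hb p a b j) - (1 - p^(a+b+2)) * (\<Sum>j. hb p (Suc a) b j))"
    by (intro sums_diff sums_mult summable_sums hb_summable[OF assms])
  ultimately have eq: "(1 - p^(a+1)) * (\<Sum>j. hb p a b j) = (1 - p^(a+b+2)) * (\<Sum>j. hb p (Suc a) b j)"
    using sums_unique2 by fastforce
  show ?thesis unfolding Ib_def using eq by (metis mult.left_commute)
qed

lemma Ib_0:
  assumes "0 < p" "p < 1"
  shows "Ib p a 0 = 1 / qint p (Suc a)"
proof -
  have "norm (p^(a+1)) < 1" using assms pw_lt1[of p a] by simp
  then have "(\<Sum>j. (p^(a+1))^j) = 1 / (1 - p^(a+1))" by (rule suminf_geometric)
  moreover have "\<And>j. p^(j*(a+1)) = (p^(a+1))^j" by (metis power_mult mult.commute)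
  ultimately have S: "(\<Sum>j. hb p a 0 j) = 1 / (1 - p^(a+1))"
    unfolding hb_def by simp
  have "p \<noteq> 1" using assms by simp
  show ?thesis unfolding Ib_def S qint_closed[OF \<open>p \<noteq> 1\<close>] by simp
qed

lemma Ib_closed:
  assumes "0 < p" "p < 1"
  shows "Ib p a b = qfact p a * qfact p b / qfact p (a + b + 1)"
proof (induction b arbitrary: a)
  case 0
  then show ?case using Ib_0[OF assms] qfact_pos[of p a] assms
    by (simp add: qfact_Suc field_simps)
next
  case (Suc b)
  have ne: "1 - p^(a+b+2) \<noteq> 0" using assms pw_lt1[of p "a+b+1"] by simp
  have r2: "Ib p (Suc a) b = (1 - p^(a+1)) / (1 - p^(a+b+2)) * Ib p a b"
    using Ib_rec2[OF assms, of a b] ne by (simp add: field_simps)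
  have "Ib p a (Suc b) = Ib p a b * ((1 - p^(b+1)) / (1 - p^(a+b+2)))"
    unfolding Ib_rec1[OF assms] r2 using ne by (simp add: field_simps power_add)
  also have "(1 - p^(b+1)) / (1 - p^(a+b+2)) = qint p (Suc b) / qint p (a + Suc b + 1)"
    using assms by (simp add: qint_closed)
  finally show ?case unfolding Suc.IH
    using qfact_pos[of p] assms
    by (simp add: qfact_Suc field_simps)
qed



definition Qk :: "real \<Rightarrow> nat \<Rightarrow> nat \<Rightarrow> real" where
  "Qk q m k = (\<Prod>i<m. qint q (k+i))"

lemma Qk_Suc: "Qk q m (Suc K) = qfact q (K + m) / qfact q K" if "q > 0"
  using prod_qint_shift[of q K m] qfact_pos[OF that, of K] unfolding Qk_def by simp

lemma key_algebra:
  assumes q: "q > 1" and KN: "K < N"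
  shows "qint (1/q) N * q^K * (qbinom (1/q) (N-1) K * (q^K / q^N)^m * (1/q)^K *
           (qfact (1/q) (K+m) * qfact (1/q) (N-1-K) / qfact (1/q) (N+m)))
         = qfact q N / qfact q (N+m) * Qk q m (Suc K)"
proof -
  define p where "p = 1/q"
  have p: "p > 0" using q by (simp add: p_def)
  have qp: "q^K * p^K = 1" using q by (simp add: p_def power_one_over)
  have fN: "qint p N * qfact p (N-1) = qfact p N"
    using KN qfact_Suc[of p "N-1"] by (simp add: mult.commute)
  have pos: "\<And>j. qfact p j > 0" using qfact_pos[OF p] .
  have iv: "\<And>j. qfact q j = qfact p j * q ^ T j" unfolding p_def using qfact_inv[OF q] .
  have Tn: "T (N+m) = T N + m * N + T m" "T (K+m) = T K + m * K + T m" by (rule T_add)+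
  have B: "qbinom p (N-1) K = qfact p (N-1) / (qfact p K * qfact p (N-1-K))"
    unfolding qbinom_def ..
  have qpos: "q > 0" using q by simp
  have L: "qint p N * q^K * (qbinom p (N-1) K * (q^K / q^N)^m * p^K *
           (qfact p (K+m) * qfact p (N-1-K) / qfact p (N+m)))
        = qfact p N * qfact p (K+m) * q^(K*m) / (qfact p K * qfact p (N+m) * q^(N*m))"
    unfolding B using pos[of "N-1-K"] pos[of K] pos[of "N+m"] qpos
    by (simp add: field_simps power_mult fN[symmetric] qp[symmetric] power_divide mult.commute[of m])
  have R: "qfact q N / qfact q (N+m) * Qk q m (Suc K)
        = qfact p N * qfact p (K+m) * q^(K*m) / (qfact p K * qfact p (N+m) * q^(N*m))"
    unfolding Qk_Suc[OF qpos] iv Tn using pos[of K] pos[of "N+m"] pos[of N] qpos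
    by (simp add: field_simps power_add)
  show ?thesis using L R unfolding p_def by simp
qed



lemma powi_eq: "q > 0 \<Longrightarrow> q powi (int (Suc K) - int (Suc N)) = q^K / (q::real)^N"
  by (simp add: power_int_diff)

lemma integral_k:
  assumes q: "q > 1" and k: "1 \<le> k" "k < n"
  shows "of_real (qint (1/q) (n-1)) * of_real (q^(k-1)) *
     qintegral (1/q) (\<lambda>t. pnk (1/q) (n-2) (k-1) (of_real (t/q)) * emon m (q powi (int k - int n) * t))
   = complex_of_real (qfact q (n-1) / qfact q (n+m-1) * Qk q m k)"
proof -
  obtain K where K: "k = Suc K" using k by (cases k) auto
  obtain N where N: "n = Suc N" using k by (cases n) auto
  have KN: "K < N" using k K N by simp
  define p where "p = 1/q"
  have p: "0 < p" "p < 1" using q by (auto simp: p_def)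
  have qpos: "q > 0" using q by simp
  define Kc where "Kc = qbinom p (N-1) K * (q^K / q^N)^m * p^K"
  have c: "q powi (int k - int n) = q^K / q^N" unfolding K N using powi_eq[OF qpos] .
  have trm: "pnk p (n-2) (k-1) (of_real (p^j/q)) * emon m (q powi (int k - int n) * p^j) * of_real (p^j)
      = of_real (Kc * hb p (K+m) (N-1-K) j)" for j
  proof -
    have e1: "n - 2 = N - 1" "k - 1 = K" using K N by auto
    have pj: "p^j / q = p^(Suc j)" by (simp add: p_def)
    have qp: "qpoch p (N - 1 - K) (of_real (p^(Suc j))) = of_real (\<Prod>s<N-1-K. 1 - p^(s+1+j))"
      unfolding qpoch_def by (simp add: power_add mult_ac)
    have A: "pnk p (n-2) (k-1) (of_real (p^j/q)) = of_real (qbinom p (N-1) K * p^(Suc j * K) * (\<Prod>s<N-1-K. 1 - p^(s+1+j)))"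
      unfolding pnk_def e1 pj qp by (simp only: of_real_mult of_real_power power_mult)
    have E: "emon m (q powi (int k - int n) * p^j) = of_real ((q^K/q^N)^m * p^(j*m))"
    proof -
      have "(q^K/q^N * p^j)^m = (q^K/q^N)^m * p^(j*m)" by (simp add: power_mult_distrib power_mult power_divide)
      then show ?thesis unfolding emon_def c by simp
    qed
    have F: "p^(Suc j * K) * p^(j*m) * p^j = p^K * p^(j*(K+m+1))"
      by (simp add: power_add[symmetric] algebra_simps)
    define B where "B = qbinom p (N-1) K"
    define P where "P = (\<Prod>s<N-1-K. 1 - p^(s+1+j))"
    define c' where "c' = (q^K/q^N)^m"
    have R: "B * p^(Suc j * K) * P * (c' * p^(j*m)) * p^j = B * c' * P * (p^(Suc j * K) * p^(j*m) * p^j)"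
      by (simp only: mult_ac)
    have "pnk p (n-2) (k-1) (of_real (p^j/q)) * emon m (q powi (int k - int n) * p^j) * of_real (p^j)
       = of_real (B * p^(Suc j * K) * P * (c' * p^(j*m)) * p^j)"
      unfolding A E B_def P_def c'_def by simp
    also have "\<dots> = of_real (Kc * hb p (K+m) (N-1-K) j)"
      unfolding R F Kc_def hb_def B_def[symmetric] c'_def[symmetric] P_def[symmetric]
      by (simp only: mult_ac)
    finally show ?thesis .
  qed
  have summ: "summable (\<lambda>j. Kc * hb p (K+m) (N-1-K) j)"
    by (intro summable_mult hb_summable p)
  have "qintegral p (\<lambda>t. pnk p (n-2) (k-1) (of_real (t/q)) * emon m (q powi (int k - int n) * t))
      = of_real (1-p) * (\<Sum>j. of_real (Kc * hb p (K+m) (N-1-K) j))"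
    unfolding qintegral_def trm ..
  also have "\<dots> = of_real ((1-p) * (\<Sum>j. Kc * hb p (K+m) (N-1-K) j))"
    unfolding of_real_mult[of "1-p"] suminf_of_real[OF summ] ..
  also have "\<dots> = of_real (Kc * Ib p (K+m) (N-1-K))"
    unfolding Ib_def using suminf_mult[OF hb_summable[OF p], of Kc] by (simp add: mult_ac)
  also have "\<dots> = of_real (Kc * (qfact p (K+m) * qfact p (N-1-K) / qfact p (N+m)))"
    using Ib_closed[OF p] KN by (simp add: add.commute add.left_commute)
  finally have I: "qintegral p (\<lambda>t. pnk p (n-2) (k-1) (of_real (t/q)) * emon m (q powi (int k - int n) * t))
     = of_real (Kc * (qfact p (K+m) * qfact p (N-1-K) / qfact p (N+m)))" .
  have "of_real (qint p (n-1)) * of_real (q^(k-1)) * of_real (Kc * (qfact p (K+m) * qfact p (N-1-K) / qfact p (N+m)))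
     = complex_of_real (qfact q (n-1) / qfact q (n+m-1) * Qk q m k)"
  proof -
    have e: "n-1 = N" "k-1 = K" "n+m-1 = N+m" using K N by auto
    have "qint p N * q^K * (Kc * (qfact p (K+m) * qfact p (N-1-K) / qfact p (N+m)))
        = qfact q N / qfact q (N+m) * Qk q m (Suc K)"
      using key_algebra[OF q KN, of m] unfolding Kc_def p_def .
    then show ?thesis unfolding e K by (simp only: of_real_mult[symmetric] diff_Suc_1)
  qed
  then show ?thesis using I unfolding p_def by simp
qed



lemma poly_sum_upto:
  fixes x :: "'a::{comm_semiring_0,semiring_1}"
  assumes "degree p \<le> n"
  shows "poly p x = (\<Sum>i\<le>n. coeff p i * x ^ i)"
proof -
  have "poly p x = (\<Sum>i\<le>degree p. coeff p i * x ^ i)" by (rule poly_altdef)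
  also have "\<dots> = (\<Sum>i\<le>n. coeff p i * x ^ i)"
    by (rule sum.mono_neutral_left) (use assms in \<open>auto simp: coeff_eq_0\<close>)
  finally show ?thesis .
qed

lemma qint_add: "q > 1 \<Longrightarrow> qint q (k + i) = q^i * qint q k + qint q i"
  by (simp add: qint_closed field_simps power_add)

lemma Sq_sum:
  assumes "m \<ge> 1"
  shows "(\<Sum>s=1..m. Sq q m s * x^s) = (\<Prod>i<m. qint q i + x * q^i)"
proof -
  define P where "P = (\<Prod>i<m. [: qint q i, q ^ i :])"
  have dP: "degree P \<le> m"
  proof -
    have "degree P \<le> (\<Sum>i<m. degree [: qint q i, q ^ i :])"
      unfolding P_def using degree_prod_sum_le[of "{..<m}" "\<lambda>i. [: qint q i, q ^ i :]"]
      by (simp add: o_def)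
    also have "\<dots> \<le> (\<Sum>i<m. 1)"
      by (intro sum_mono) (simp add: degree_pCons_le)
    finally show ?thesis by simp
  qed
  have "poly P x = (\<Prod>i<m. qint q i + x * q^i)"
    unfolding P_def by (simp add: poly_prod)
  moreover have "poly P x = (\<Sum>i\<le>m. coeff P i * x^i)" by (rule poly_sum_upto[OF dP])
  moreover have "coeff P 0 = 0"
  proof -
    have "coeff P 0 = poly P 0" by (simp add: poly_0_coeff_0)
    also have "\<dots> = (\<Prod>i<m. qint q i)" unfolding P_def by (simp add: poly_prod)
    also have "\<dots> = 0" by (rule prod_zero) (use assms in \<open>auto intro!: bexI[of _ 0]\<close>)
    finally show ?thesis .
  qed
  moreover have "(\<Sum>i\<le>m. coeff P i * x^i) = coeff P 0 * x^0 + (\<Sum>i=1..m. coeff P i * x^i)"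
    by (simp add: atMost_atLeast0 sum.atLeast_Suc_atMost)
  ultimately show ?thesis unfolding Sq_def P_def[symmetric] by simp
qed

lemma Qk_Sq:
  assumes q: "q > 1" and m: "m \<ge> 1"
  shows "(\<Sum>s=1..m. Sq q m s * qint q k ^ s) = Qk q m k"
  unfolding Sq_sum[OF m] Qk_def qint_add[OF q]
  by (intro prod.cong refl) (simp add: mult.commute)

lemma Qk_0: "m \<ge> 1 \<Longrightarrow> Qk q m 0 = 0"
  unfolding Qk_def by (rule prod_zero) (auto intro!: bexI[of _ 0])

lemma rhs_transform:
  assumes q: "q > 1" and m: "m \<ge> 1" and n: "n \<ge> 1"
  shows "(\<Sum>s=1..m. of_real (Sq q m s * qint q n ^ s) * Bq_e q n s z)
       = (\<Sum>k=0..n. of_real (Qk q m k) * pnk q n k z)"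
proof -
  have nz: "qint q n \<noteq> 0" using qint_pos[of q n] q n by simp
  have "(\<Sum>s=1..m. of_real (Sq q m s * qint q n ^ s) * Bq_e q n s z)
     = (\<Sum>s=1..m. \<Sum>k=0..n. of_real (Sq q m s * qint q k ^ s) * pnk q n k z)"
    unfolding Bq_e_def sum_distrib_left
    by (intro sum.cong refl) (simp add: nz power_divide)
  also have "\<dots> = (\<Sum>k=0..n. \<Sum>s=1..m. of_real (Sq q m s * qint q k ^ s) * pnk q n k z)"
    by (rule sum.swap)
  also have "\<dots> = (\<Sum>k=0..n. of_real (Qk q m k) * pnk q n k z)"
    by (intro sum.cong refl) (simp add: sum_distrib_right[symmetric] Qk_Sq[OF q m, symmetric] del: of_real_mult)
  finally show ?thesis .
qed

lemma U_formula:
  assumes q: "q > 1" and m: "m \<ge> 1" and n: "n \<ge> 1"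
  shows "Uop q n (emon m) z = (\<Sum>k=0..n. of_real (qfact q (n-1) / qfact q (n+m-1) * Qk q m k) * pnk q n k z)"
proof -
  define C where "C = qfact q (n-1) / qfact q (n+m-1)"
  have e0: "emon m 0 = 0" "emon m 1 = 1" using m by (auto simp: emon_def)
  have Cn: "C * Qk q m n = 1"
  proof -
    obtain N where N: "n = Suc N" using n by (cases n) auto
    show ?thesis using Qk_Suc[of q m N] q qfact_pos[of q "N+m"] qfact_pos[of q N] unfolding C_def N by simp
  qed
  have mid: "of_real (qint (1/q) (n-1)) * (\<Sum>k=1..n-1. of_real (q^(k-1)) * pnk q n k z *
          qintegral (1/q) (\<lambda>t. pnk (1/q) (n-2) (k-1) (of_real (t/q)) * emon m (q powi (int k - int n) * t)))
        = (\<Sum>k=1..n-1. of_real (C * Qk q m k) * pnk q n k z)"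
    unfolding sum_distrib_left
  proof (intro sum.cong refl)
    fix k assume "k \<in> {1..n-1}"
    then have k: "1 \<le> k" "k < n" by auto
    show "of_real (qint (1/q) (n-1)) * (of_real (q^(k-1)) * pnk q n k z *
          qintegral (1/q) (\<lambda>t. pnk (1/q) (n-2) (k-1) (of_real (t/q)) * emon m (q powi (int k - int n) * t)))
        = of_real (C * Qk q m k) * pnk q n k z"
      using integral_k[OF q k, of m] unfolding C_def by (simp add: mult_ac)
  qed
  have split: "{0..n} = insert 0 (insert n {1..n-1})" using n by auto
  have "(\<Sum>k=0..n. of_real (C * Qk q m k) * pnk q n k z)
      = of_real (C * Qk q m 0) * pnk q n 0 z + (of_real (C * Qk q m n) * pnk q n n z
          + (\<Sum>k=1..n-1. of_real (C * Qk q m k) * pnk q n k z))"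
    unfolding split using n by (subst sum.insert; auto)+
  also have "\<dots> = pnk q n n z + (\<Sum>k=1..n-1. of_real (C * Qk q m k) * pnk q n k z)"
    using Cn Qk_0[OF m] by simp
  finally show ?thesis
    unfolding Uop_def e0 mid C_def[symmetric] by simp
qed

theorem formula:
  assumes q: "q > 1" and m: "m \<ge> 1" and n: "n \<ge> 1"
  shows "Uop q n (emon m) z =
           of_real (qfact q (n - 1) / qfact q (n + m - 1)) *
           (\<Sum>s=1..m. of_real (Sq q m s * qint q n ^ s) * Bq_e q n s z)"
  unfolding U_formula[OF assms] rhs_transform[OF assms] sum_distrib_left
  by (simp add: mult_ac)



lemma qbinom_0: assumes "q > 0" shows "qbinom q n 0 = 1"
  unfolding qbinom_def using qfact_pos[OF assms, of n] by simp
lemma qbinom_n: assumes "q > 0" shows "qbinom q n n = 1"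
  unfolding qbinom_def using qfact_pos[OF assms, of n] by simp

lemma qbinom_pascal:
  assumes q: "q > 1" and i: "i < n"
  shows "qbinom q (Suc n) (Suc i) = qbinom q n i + q^(Suc i) * qbinom q n (Suc i)"
proof -
  obtain d where d: "n - i = Suc d" using i by (cases "n - i") auto
  have d2: "n - Suc i = d" using d by simp
  have pos: "\<And>j. qfact q j > 0" using qfact_pos q by simp
  have nd: "n = Suc d + i" using d i by simp
  have a: "qint q (Suc n) = q^(Suc i) * qint q (Suc d) + qint q (Suc i)"
    using qint_add[OF q, of "Suc d" "Suc i"] unfolding nd by simp
  show ?thesis unfolding qbinom_def d d2 Suc_diff_le[OF less_imp_le[OF i]] qfact_Suc
    using pos[of n] pos[of i] pos[of d] qint_pos[of q "Suc i"] qint_pos[of q "Suc d"] q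
    by (simp add: field_simps a d qfact_Suc)
qed

definition LL :: "real \<Rightarrow> nat \<Rightarrow> complex \<Rightarrow> complex \<Rightarrow> complex" where
  "LL q n x z = (\<Sum>k\<le>n. x^k * pnk q n k z)"

definition pii :: "real \<Rightarrow> nat \<Rightarrow> complex \<Rightarrow> complex" where
  "pii q r x = (\<Prod>j<r. x - of_real (q^j))"

definition RR :: "real \<Rightarrow> nat \<Rightarrow> complex \<Rightarrow> complex \<Rightarrow> complex" where
  "RR q n x z = (\<Sum>r\<le>n. of_real (qbinom q n r) * pii q r x * z^r)"

lemma qpoch_Suc: "qpoch q (Suc j) z = (1 - z) * qpoch q j (of_real q * z)"
  unfolding qpoch_def prod.lessThan_Suc_shift by (simp add: mult_ac)

lemma LL_rec:
  assumes q: "q > 1"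
  shows "LL q (Suc n) x z = x * z * LL q n x z + (1 - z) * LL q n x (of_real q * z)"
proof -
  define b where "b = (\<lambda>n k. complex_of_real (qbinom q n k))"
  define G where "G = (\<lambda>i. x^(Suc i) * b n i * z^(Suc i) * qpoch q (n - i) z)"
  define H where "H = (\<lambda>i. x^(Suc i) * (of_real q)^(Suc i) * b n (Suc i) * z^(Suc i) * qpoch q (n - i) z)"
  define f where "f = (\<lambda>k. x^k * pnk q (Suc n) k z)"
  have bn: "b n n = 1" "b (Suc n) (Suc n) = 1" "\<And>k. b k 0 = 1"
    using q by (auto simp: b_def qbinom_n qbinom_0)
  have pn: "pnk q n k w = b n k * w^k * qpoch q (n - k) w" for n k w
    unfolding pnk_def b_def ..
  have f0: "f 0 = qpoch q (Suc n) z" unfolding f_def pn using bn by simp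
  have fn: "f (Suc n) = G n" unfolding f_def G_def pn using bn by simp
  have fi: "f (Suc i) = G i + H i" if "i < n" for i
  proof -
    have "b (Suc n) (Suc i) = b n i + of_real q ^ Suc i * b n (Suc i)"
      unfolding b_def qbinom_pascal[OF q that] by simp
    moreover have "Suc n - Suc i = n - i" by simp
    ultimately show ?thesis unfolding f_def G_def H_def pn by (simp add: algebra_simps)
  qed
  have "LL q (Suc n) x z = f 0 + (\<Sum>i<n. f (Suc i)) + f (Suc n)"
    unfolding LL_def f_def[symmetric] sum.atMost_shift sum.lessThan_Suc by (simp add: add.assoc)
  also have "\<dots> = qpoch q (Suc n) z + (\<Sum>i<n. G i + H i) + G n"
    unfolding f0 fn using fi by simp
  finally have L: "LL q (Suc n) x z = qpoch q (Suc n) z + (\<Sum>i<n. G i + H i) + G n" .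
  have A: "x * z * LL q n x z = (\<Sum>i<n. G i) + G n"
    unfolding LL_def sum_distrib_left lessThan_Suc_atMost[symmetric] sum.lessThan_Suc
    unfolding G_def pn by (simp add: algebra_simps sum_distrib_left)
  have qs: "qpoch q (Suc (n - k)) z = (1 - z) * qpoch q (n - k) (of_real q * z)" for k
    by (rule qpoch_Suc)
  have B: "(1 - z) * LL q n x (of_real q * z) = qpoch q (Suc n) z + (\<Sum>i<n. H i)"
  proof -
    have "(1 - z) * LL q n x (of_real q * z) = (\<Sum>k\<le>n. x^k * b n k * (of_real q * z)^k * qpoch q (Suc (n - k)) z)"
      unfolding LL_def sum_distrib_left pn qs by (simp add: algebra_simps)
    also have "\<dots> = qpoch q (Suc n) z + (\<Sum>i<n. H i)"
      unfolding sum.atMost_shift H_def using bn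
      by (simp add: algebra_simps Suc_diff_Suc power_mult_distrib)
    finally show ?thesis .
  qed
  show ?thesis unfolding L A B by (simp add: sum.distrib algebra_simps)
qed

lemma RR_rec:
  assumes q: "q > 1"
  shows "RR q (Suc n) x z = x * z * RR q n x z + (1 - z) * RR q n x (of_real q * z)"
proof -
  define b where "b = (\<lambda>n k. complex_of_real (qbinom q n k))"
  define G where "G = (\<lambda>i. b n i * pii q (Suc i) x * z^(Suc i))"
  define H where "H = (\<lambda>i. (of_real q)^(Suc i) * b n (Suc i) * pii q (Suc i) x * z^(Suc i))"
  define g where "g = (\<lambda>r. b (Suc n) r * pii q r x * z^r)"
  have bn: "b n n = 1" "b (Suc n) (Suc n) = 1" "\<And>k. b k 0 = 1"
    using q by (auto simp: b_def qbinom_n qbinom_0)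
  have piS: "pii q (Suc r) x = pii q r x * (x - of_real (q^r))" for r
    unfolding pii_def by simp
  have pi0: "pii q 0 x = 1" unfolding pii_def by simp
  have g0: "g 0 = 1" unfolding g_def using bn pi0 by simp
  have gn: "g (Suc n) = G n" unfolding g_def G_def using bn by simp
  have gi: "g (Suc i) = G i + H i" if "i < n" for i
  proof -
    have "b (Suc n) (Suc i) = b n i + of_real q ^ Suc i * b n (Suc i)"
      unfolding b_def qbinom_pascal[OF q that] by simp
    then show ?thesis unfolding g_def G_def H_def by (simp add: algebra_simps)
  qed
  have "RR q (Suc n) x z = (\<Sum>r\<le>Suc n. g r)" by (simp add: RR_def g_def b_def)
  also have "\<dots> = g 0 + (\<Sum>i<n. g (Suc i)) + g (Suc n)"
    unfolding sum.atMost_shift sum.lessThan_Suc by (simp add: add.assoc)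
  also have "\<dots> = 1 + (\<Sum>i<n. G i + H i) + G n"
    unfolding g0 gn using gi by simp
  finally have L: "RR q (Suc n) x z = 1 + (\<Sum>i<n. G i + H i) + G n" .
  have "x * z * RR q n x z + (1 - z) * RR q n x (of_real q * z)
      = (\<Sum>r\<le>n. G r + (of_real q)^r * b n r * pii q r x * z^r)"
    unfolding RR_def b_def[symmetric] sum_distrib_left sum.distrib[symmetric] G_def piS
    by (intro sum.cong refl) (simp add: algebra_simps power_mult_distrib b_def)
  also have "\<dots> = (\<Sum>i<n. G i) + G n + (1 + (\<Sum>i<n. H i))"
  proof -
    have S1: "(\<Sum>r\<le>n. G r) = (\<Sum>i<n. G i) + G n"
      by (simp add: lessThan_Suc_atMost[symmetric])
    have S2: "(\<Sum>r\<le>n. (of_real q)^r * b n r * pii q r x * z^r) = 1 + (\<Sum>i<n. H i)"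
      unfolding sum.atMost_shift H_def by (simp add: bn pi0)
    show ?thesis unfolding sum.distrib S1 S2 ..
  qed
  finally show ?thesis unfolding L by (simp add: sum.distrib algebra_simps)
qed

lemma LL_RR:
  assumes q: "q > 1"
  shows "LL q n x z = RR q n x z"
proof (induction n arbitrary: z)
  case 0
  then show ?case using q by (simp add: LL_def RR_def pnk_def qpoch_def pii_def qbinom_0)
next
  case (Suc n)
  then show ?case by (simp add: LL_rec[OF q] RR_rec[OF q])
qed



definition Qp :: "real \<Rightarrow> nat \<Rightarrow> real poly" where
  "Qp q m = (\<Prod>i<m. [: -1/(q-1), q^i/(q-1) :])"

lemma Qp_degree: "degree (Qp q m) \<le> m"
proof -
  have "degree (Qp q m) \<le> (\<Sum>i<m. degree [: -1/(q-1), q^i/(q-1) :])"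
    unfolding Qp_def using degree_prod_sum_le[of "{..<m}" "\<lambda>i. [: -1/(q-1), q^i/(q-1) :]"]
    by (simp add: o_def)
  also have "\<dots> \<le> (\<Sum>i<m. 1)"
    by (intro sum_mono) (simp add: degree_pCons_le)
  finally show ?thesis by simp
qed

lemma qint_lin: assumes q: "q > 1"
  shows "qint q (k+i) = -1/(q-1) + q^k * (q^i/(q-1))"
proof -
  have ne: "q - 1 \<noteq> 0" "1 - q \<noteq> 0" using q by auto
  have "qint q (k+i) = (q^(k+i) - 1)/(q-1)"
    using ne by (simp add: qint_closed divide_simps) (simp add: algebra_simps)
  also have "\<dots> = -1/(q-1) + q^k * (q^i/(q-1))"
    using ne by (simp add: divide_simps power_add)
  finally show ?thesis .
qed

lemma Qk_coeffs:
  assumes q: "q > 1"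
  shows "Qk q m k = (\<Sum>s\<le>m. coeff (Qp q m) s * (q^s)^k)"
proof -
  have "Qk q m k = poly (Qp q m) (q^k)"
    unfolding Qk_def Qp_def poly_prod using q
    by (intro prod.cong refl) (simp add: qint_lin mult.commute)
  also have "\<dots> = (\<Sum>s\<le>m. coeff (Qp q m) s * (q^k)^s)"
    by (rule poly_sum_upto[OF Qp_degree])
  finally show ?thesis by (simp add: power_mult[symmetric] mult.commute)
qed

lemma degree_part:
  assumes q: "q > 1"
  shows "\<exists>P :: complex poly. degree P \<le> min m n \<and>
           (\<forall>z. (\<Sum>k=0..n. of_real (C * Qk q m k) * pnk q n k z) = poly P z)"
proof -
  define c where "c = (\<lambda>s. complex_of_real (coeff (Qp q m) s))"
  define d where "d = (\<lambda>r. of_real C * (\<Sum>s\<le>m. c s * of_real (qbinom q n r) * pii q r (of_real (q^s))))"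
  define P where "P = (\<Sum>r\<le>n. monom (d r) r)"
  have dz: "d r = 0" if "r > m" for r
  proof -
    have "pii q r (of_real (q^s)) = 0" if "s \<le> m" for s
      unfolding pii_def using \<open>r > m\<close> that by (intro prod_zero) (auto intro!: bexI[of _ s])
    then show ?thesis unfolding d_def by simp
  qed
  have cP: "coeff P i = (if i \<le> n then d i else 0)" for i
    unfolding P_def coeff_sum by (simp add: sum.delta')
  have degP: "degree P \<le> min m n"
    by (rule degree_le) (auto simp: cP dz)
  have val: "(\<Sum>k=0..n. of_real (C * Qk q m k) * pnk q n k z) = poly P z" for z
  proof -
    have "(\<Sum>k=0..n. of_real (C * Qk q m k) * pnk q n k z)
        = (\<Sum>k\<le>n. of_real C * (\<Sum>s\<le>m. c s * of_real (q^s)^k) * pnk q n k z)"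
      unfolding atMost_atLeast0 Qk_coeffs[OF q] c_def by simp
    also have "\<dots> = of_real C * (\<Sum>s\<le>m. c s * LL q n (of_real (q^s)) z)"
      unfolding LL_def sum_distrib_left sum_distrib_right
      by (subst sum.swap) (simp add: mult_ac)
    also have "\<dots> = of_real C * (\<Sum>s\<le>m. c s * RR q n (of_real (q^s)) z)"
      unfolding LL_RR[OF q] ..
    also have "\<dots> = (\<Sum>r\<le>n. d r * z^r)"
      unfolding RR_def d_def sum_distrib_left sum_distrib_right
      by (subst sum.swap) (simp add: mult_ac)
    also have "\<dots> = poly P z"
      unfolding P_def poly_sum poly_monom ..
    finally show ?thesis .
  qed
  show ?thesis using degP val by blast
qed


theorem mainTheorem5:
  fixes q :: real and m n :: nat
  assumes "q > 1" and "m \<ge> 1" and "n \<ge> 1"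
  shows "(\<exists>P :: complex poly. degree P \<le> min m n \<and> (\<forall>z. Uop q n (emon m) z = poly P z))
     \<and> (\<forall>z. Uop q n (emon m) z =
           of_real (qfact q (n - 1) / qfact q (n + m - 1)) *
           (\<Sum>s=1..m. of_real (Sq q m s * qint q n ^ s) * Bq_e q n s z))"
proof
  obtain P :: "complex poly" where P: "degree P \<le> min m n"
    "\<forall>z. (\<Sum>k=0..n. of_real (qfact q (n-1) / qfact q (n+m-1) * Qk q m k) * pnk q n k z) = poly P z"
    using degree_part[OF assms(1), of m n "qfact q (n-1) / qfact q (n+m-1)"] by blast
  show "\<exists>P :: complex poly. degree P \<le> min m n \<and> (\<forall>z. Uop q n (emon m) z = poly P z)"
    using P U_formula[OF assms] by auto
  show "\<forall>z. Uop q n (emon m) z =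
           of_real (qfact q (n - 1) / qfact q (n + m - 1)) *
           (\<Sum>s=1..m. of_real (Sq q m s * qint q n ^ s) * Bq_e q n s z)"
    using formula[OF assms] by blast
qed

end
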